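(* Let $M$ be a $\lambda$-term. (1) (CbN) If $M\to_\beta M'$ then $M^n\to_v M'^n$ (hence $M^n\to_b M'^n$). Conversely, if $M^n\to_b S$ then $M^n\to_v S$, and there is a $\lambda$-term $M'$ with $S=M'^n$ and $M\to_\beta M'$. (2) (Ground CbN) If $M\to_{w\beta} M'$ then $M^n\to_{wv} M'^n$ (hence $M^n\to_{wb} M'^n$). Conversely, if $M^n\to_{wb} S$ then $M^n\to_{wv} S$, and there is a $\lambda$-term $M'$ with $S=M'^n$ and $M\to_{w\beta} M'$. (3) (CbV) If $M\to_{\beta_v} M'$ then there is $S_0$ with $M^v\to_d S_0\to_v M'^v$ (hence $M^v\to_b\to_b M'^v$). Conversely, if $M^v\to_d S_0\to_v S$ for some $S_0,S$, then there is a $\lambda$-term $M'$ with $S=M'^v$ and $M\to_{\beta_v}M'$. (4) (Ground CbV) If $M\to_{w\beta_v} M'$ then there is $S_0$ with $M^v\to_{wd} S_0\to_{wv} M'^v$ (hence $M^v\to_{wb}\to_{wb} M'^v$). Conversely, if $M^v\to_{wd} S_0\to_{wv} S$ for some $S_0,S$, then there is a $\lambda$-term $M'$ with $S=M'^v$ and $M\to_{w\beta_v}M'$.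
   Context: Bang calculus. Fix a countably infinite set of variables. The set $!\Lambda$ of terms is $T,S,R ::= x \mid \lambda x.T \mid T\,S \mid \mathrm{der}\,T \mid\ !T$ (variable, abstraction, application, dereliction, box); $\lambda$ is the only binder, terms are taken up to $\alpha$-conversion, and $T\{S/x\}$ is capture-avoiding substitution (so $(!T)\{S/x\}=\,!(T\{S/x\})$). Contexts: $C ::= [\cdot] \mid \lambda x.C \mid C\,T \mid T\,C \mid \mathrm{der}\,C \mid\ !C$; ground contexts: $W ::= [\cdot] \mid \lambda x.W \mid W\,T \mid T\,W \mid \mathrm{der}\,W$. Root steps: $(\lambda x.T)(!S)\mapsto_v T\{S/x\}$, $\mathrm{der}(!T)\mapsto_d T$, and $\mapsto_b\,=\,\mapsto_v\cup\mapsto_d$. For $r\in\{v,d,b\}$, $T\to_r S$ iff $T=C[T']$, $S=C[S']$ for some context $C$ and $T'\mapsto_r S'$; $T\to_{wr}S$ is defined in the same way but with ground contexts $W$ only. $\lambda$-calculus. $\lambda$-terms: $M,N ::= V \mid M\,N$, values $V ::= x \mid \lambda x.M$. $\lambda$-contexts $C ::= [\cdot]\mid \lambda x.C\mid C\,M\mid M\,C$; CbN ground contexts $N ::= [\cdot]\mid\lambda x.N\mid N\,M$; CbV ground contexts $V ::= [\cdot]\mid V\,M\mid M\,V$. Root steps $(\lambda x.M)N\mapsto_\beta M\{N/x\}$ and $(\lambda x.M)V\mapsto_{\beta_v} M\{V/x\}$ for $V$ a value. $\to_\beta,\to_{\beta_v}$ are closures of these under $\lambda$-contexts; $\to_{w\beta}$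 is the closure of $\mapsto_\beta$ under CbN ground contexts; $\to_{w\beta_v}$ is the closure of $\mapsto_{\beta_v}$ under CbV ground contexts. Translations $\Lambda\to\,!\Lambda$: CbN: $x^n=x$, $(\lambda x.M)^n=\lambda x.M^n$, $(MN)^n=M^n\,(!N^n)$. CbV: $x^v=\,!x$, $(\lambda x.M)^v=\,!(\lambda x.M^v)$, $(MN)^v=(\mathrm{der}\,M^v)\,N^v$. *)

theory Defs
  imports Main
begin

(* Terms up to alpha-conversion are represented with de Bruijn indices:
   variable i refers to the i-th enclosing binder, or (if i exceeds the number of
   enclosing binders) to a free variable. *)

datatype bterm = BVar nat | BLam bterm | BApp bterm bterm | Der bterm | Box bterm

primrec blift :: "bterm \<Rightarrow> nat \<Rightarrow> bterm" where
  "blift (BVar i) k = (if i < k then BVar i else BVar (Suc i))"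
| "blift (BLam t) k = BLam (blift t (Suc k))"
| "blift (BApp t s) k = BApp (blift t k) (blift s k)"
| "blift (Der t) k = Der (blift t k)"
| "blift (Box t) k = Box (blift t k)"

primrec bsubst :: "bterm \<Rightarrow> bterm \<Rightarrow> nat \<Rightarrow> bterm" where
  "bsubst (BVar i) s k = (if k < i then BVar (i - 1) else if i = k then s else BVar i)"
| "bsubst (BLam t) s k = BLam (bsubst t (blift s 0) (Suc k))"
| "bsubst (BApp t u) s k = BApp (bsubst t s k) (bsubst u s k)"
| "bsubst (Der t) s k = Der (bsubst t s k)"
| "bsubst (Box t) s k = Box (bsubst t s k)"

datatype bctx = BHole | BCLam bctx | BCAppL bctx bterm | BCAppR bterm bctx | BCDer bctx | BCBox bctx

primrec bfill :: "bctx \<Rightarrow> bterm \<Rightarrow> bterm" where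
  "bfill BHole t = t"
| "bfill (BCLam C) t = BLam (bfill C t)"
| "bfill (BCAppL C s) t = BApp (bfill C t) s"
| "bfill (BCAppR s C) t = BApp s (bfill C t)"
| "bfill (BCDer C) t = Der (bfill C t)"
| "bfill (BCBox C) t = Box (bfill C t)"

primrec bground :: "bctx \<Rightarrow> bool" where
  "bground BHole = True"
| "bground (BCLam C) = bground C"
| "bground (BCAppL C s) = bground C"
| "bground (BCAppR s C) = bground C"
| "bground (BCDer C) = bground C"
| "bground (BCBox C) = False"

definition root_v :: "bterm \<Rightarrow> bterm \<Rightarrow> bool" where
  "root_v T S \<longleftrightarrow> (\<exists>t s. T = BApp (BLam t) (Box s) \<and> S = bsubst t s 0)"

definition root_d :: "bterm \<Rightarrow> bterm \<Rightarrow> bool" where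
  "root_d T S \<longleftrightarrow> T = Der (Box S)"

definition root_b :: "bterm \<Rightarrow> bterm \<Rightarrow> bool" where
  "root_b T S \<longleftrightarrow> root_v T S \<or> root_d T S"

definition bstep :: "(bterm \<Rightarrow> bterm \<Rightarrow> bool) \<Rightarrow> bterm \<Rightarrow> bterm \<Rightarrow> bool" where
  "bstep r T S \<longleftrightarrow> (\<exists>C T' S'. T = bfill C T' \<and> S = bfill C S' \<and> r T' S')"

definition bwstep :: "(bterm \<Rightarrow> bterm \<Rightarrow> bool) \<Rightarrow> bterm \<Rightarrow> bterm \<Rightarrow> bool" where
  "bwstep r T S \<longleftrightarrow> (\<exists>C T' S'. bground C \<and> T = bfill C T' \<and> S = bfill C S' \<and> r T' S')"

abbreviation "step_v \<equiv> bstep root_v"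
abbreviation "step_d \<equiv> bstep root_d"
abbreviation "step_b \<equiv> bstep root_b"
abbreviation "wstep_v \<equiv> bwstep root_v"
abbreviation "wstep_d \<equiv> bwstep root_d"
abbreviation "wstep_b \<equiv> bwstep root_b"

datatype lterm = Var nat | Lam lterm | App lterm lterm

primrec llift :: "lterm \<Rightarrow> nat \<Rightarrow> lterm" where
  "llift (Var i) k = (if i < k then Var i else Var (Suc i))"
| "llift (Lam t) k = Lam (llift t (Suc k))"
| "llift (App t s) k = App (llift t k) (llift s k)"

primrec lsubst :: "lterm \<Rightarrow> lterm \<Rightarrow> nat \<Rightarrow> lterm" where
  "lsubst (Var i) s k = (if k < i then Var (i - 1) else if i = k then s else Var i)"
| "lsubst (Lam t) s k = Lam (lsubst t (llift s 0) (Suc k))"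
| "lsubst (App t u) s k = App (lsubst t s k) (lsubst u s k)"

primrec is_value :: "lterm \<Rightarrow> bool" where
  "is_value (Var i) = True"
| "is_value (Lam t) = True"
| "is_value (App t u) = False"

datatype lctx = LHole | LCLam lctx | LCAppL lctx lterm | LCAppR lterm lctx

primrec lfill :: "lctx \<Rightarrow> lterm \<Rightarrow> lterm" where
  "lfill LHole t = t"
| "lfill (LCLam C) t = Lam (lfill C t)"
| "lfill (LCAppL C s) t = App (lfill C t) s"
| "lfill (LCAppR s C) t = App s (lfill C t)"

primrec cbn_ground :: "lctx \<Rightarrow> bool" where
  "cbn_ground LHole = True"
| "cbn_ground (LCLam C) = cbn_ground C"
| "cbn_ground (LCAppL C s) = cbn_ground C"
| "cbn_ground (LCAppR s C) = False"

primrec cbv_ground :: "lctx \<Rightarrow> bool" where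
  "cbv_ground LHole = True"
| "cbv_ground (LCLam C) = False"
| "cbv_ground (LCAppL C s) = cbv_ground C"
| "cbv_ground (LCAppR s C) = cbv_ground C"

definition root_beta :: "lterm \<Rightarrow> lterm \<Rightarrow> bool" where
  "root_beta M N \<longleftrightarrow> (\<exists>t s. M = App (Lam t) s \<and> N = lsubst t s 0)"

definition root_betav :: "lterm \<Rightarrow> lterm \<Rightarrow> bool" where
  "root_betav M N \<longleftrightarrow> (\<exists>t s. is_value s \<and> M = App (Lam t) s \<and> N = lsubst t s 0)"

definition beta :: "lterm \<Rightarrow> lterm \<Rightarrow> bool" where
  "beta M N \<longleftrightarrow> (\<exists>C M' N'. M = lfill C M' \<and> N = lfill C N' \<and> root_beta M' N')"

definition betav :: "lterm \<Rightarrow> lterm \<Rightarrow> bool" where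
  "betav M N \<longleftrightarrow> (\<exists>C M' N'. M = lfill C M' \<and> N = lfill C N' \<and> root_betav M' N')"

definition wbeta :: "lterm \<Rightarrow> lterm \<Rightarrow> bool" where
  "wbeta M N \<longleftrightarrow> (\<exists>C M' N'. cbn_ground C \<and> M = lfill C M' \<and> N = lfill C N' \<and> root_beta M' N')"

definition wbetav :: "lterm \<Rightarrow> lterm \<Rightarrow> bool" where
  "wbetav M N \<longleftrightarrow> (\<exists>C M' N'. cbv_ground C \<and> M = lfill C M' \<and> N = lfill C N' \<and> root_betav M' N')"

primrec cbn :: "lterm \<Rightarrow> bterm" where
  "cbn (Var i) = BVar i"
| "cbn (Lam t) = BLam (cbn t)"
| "cbn (App t s) = BApp (cbn t) (Box (cbn s))"

primrec cbv :: "lterm \<Rightarrow> bterm" where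
  "cbv (Var i) = Box (BVar i)"
| "cbv (Lam t) = Box (BLam (cbv t))"
| "cbv (App t s) = BApp (Der (cbv t)) (cbv s)"

end

theory Submission
  imports Defs
begin

lemma bstep_root: "r a b \<Longrightarrow> bstep r a b"
  unfolding bstep_def by (metis bfill.simps(1))
lemma bwstep_root: "r a b \<Longrightarrow> bwstep r a b"
  unfolding bwstep_def by (metis bfill.simps(1) bground.simps(1))

lemma bstep_Lam: "bstep r a b \<Longrightarrow> bstep r (BLam a) (BLam b)"
  unfolding bstep_def by (metis bfill.simps(2))
lemma bstep_AppL: "bstep r a b \<Longrightarrow> bstep r (BApp a c) (BApp b c)"
  unfolding bstep_def by (metis bfill.simps(3))
lemma bstep_AppR: "bstep r a b \<Longrightarrow> bstep r (BApp c a) (BApp c b)"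
  unfolding bstep_def by (metis bfill.simps(4))
lemma bstep_Der: "bstep r a b \<Longrightarrow> bstep r (Der a) (Der b)"
  unfolding bstep_def by (metis bfill.simps(5))
lemma bstep_Box: "bstep r a b \<Longrightarrow> bstep r (Box a) (Box b)"
  unfolding bstep_def by (metis bfill.simps(6))

lemma bwstep_Lam: "bwstep r a b \<Longrightarrow> bwstep r (BLam a) (BLam b)"
  unfolding bwstep_def by (metis bfill.simps(2) bground.simps(2))
lemma bwstep_AppL: "bwstep r a b \<Longrightarrow> bwstep r (BApp a c) (BApp b c)"
  unfolding bwstep_def by (metis bfill.simps(3) bground.simps(3))
lemma bwstep_AppR: "bwstep r a b \<Longrightarrow> bwstep r (BApp c a) (BApp c b)"
  unfolding bwstep_def by (metis bfill.simps(4) bground.simps(4))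
lemma bwstep_Der: "bwstep r a b \<Longrightarrow> bwstep r (Der a) (Der b)"
  unfolding bwstep_def by (metis bfill.simps(5) bground.simps(5))

lemma bstep_mono: "bstep r a b \<Longrightarrow> (\<And>x y. r x y \<Longrightarrow> r' x y) \<Longrightarrow> bstep r' a b"
  unfolding bstep_def by blast
lemma bwstep_mono: "bwstep r a b \<Longrightarrow> (\<And>x y. r x y \<Longrightarrow> r' x y) \<Longrightarrow> bwstep r' a b"
  unfolding bwstep_def by blast

lemma bstep_inv:
  "bstep r T S \<Longrightarrow> r T S \<or>
    (\<exists>a a'. T = BLam a \<and> S = BLam a' \<and> bstep r a a') \<or>
    (\<exists>a b a'. T = BApp a b \<and> S = BApp a' b \<and> bstep r a a') \<or>
    (\<exists>a b b'. T = BApp a b \<and> S = BApp a b' \<and> bstep r b b') \<or>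
    (\<exists>a a'. T = Der a \<and> S = Der a' \<and> bstep r a a') \<or>
    (\<exists>a a'. T = Box a \<and> S = Box a' \<and> bstep r a a')"
  unfolding bstep_def
  apply (elim exE conjE)
  subgoal for C T' S' by (cases C) auto
  done

lemma bwstep_inv:
  "bwstep r T S \<Longrightarrow> r T S \<or>
    (\<exists>a a'. T = BLam a \<and> S = BLam a' \<and> bwstep r a a') \<or>
    (\<exists>a b a'. T = BApp a b \<and> S = BApp a' b \<and> bwstep r a a') \<or>
    (\<exists>a b b'. T = BApp a b \<and> S = BApp a b' \<and> bwstep r b b') \<or>
    (\<exists>a a'. T = Der a \<and> S = Der a' \<and> bwstep r a a')"
  unfolding bwstep_def
  apply (elim exE conjE)
  subgoal for C T' S' by (cases C) auto
  done

lemma bstep_BVar: "bstep r (BVar i) S \<Longrightarrow> r (BVar i) S"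
  unfolding bstep_def
  apply (elim exE conjE)
  subgoal for C T' S' by (cases C) auto
  done
lemma bwstep_BVar: "bwstep r (BVar i) S \<Longrightarrow> r (BVar i) S"
  unfolding bwstep_def
  apply (elim exE conjE)
  subgoal for C T' S' by (cases C) auto
  done
lemma bwstep_Box: "bwstep r (Box a) S \<Longrightarrow> r (Box a) S"
  unfolding bwstep_def
  apply (elim exE conjE)
  subgoal for C T' S' by (cases C) auto
  done

lemma bstep_LamE: "bstep r (BLam a) S \<Longrightarrow> r (BLam a) S \<or> (\<exists>a'. S = BLam a' \<and> bstep r a a')"
  unfolding bstep_def
  apply (elim exE conjE)
  subgoal for C T' S' by (cases C) auto
  done
lemma bstep_AppE: "bstep r (BApp a b) S \<Longrightarrow> r (BApp a b) S \<or> (\<exists>a'. S = BApp a' b \<and> bstep r a a') \<or> (\<exists>b'. S = BApp a b' \<and> bstep r b b')"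
  unfolding bstep_def
  apply (elim exE conjE)
  subgoal for C T' S' by (cases C) auto
  done
lemma bstep_DerE: "bstep r (Der a) S \<Longrightarrow> r (Der a) S \<or> (\<exists>a'. S = Der a' \<and> bstep r a a')"
  unfolding bstep_def
  apply (elim exE conjE)
  subgoal for C T' S' by (cases C) auto
  done
lemma bwstep_LamE: "bwstep r (BLam a) S \<Longrightarrow> r (BLam a) S \<or> (\<exists>a'. S = BLam a' \<and> bwstep r a a')"
  unfolding bwstep_def
  apply (elim exE conjE)
  subgoal for C T' S' by (cases C) auto
  done
lemma bwstep_AppE: "bwstep r (BApp a b) S \<Longrightarrow> r (BApp a b) S \<or> (\<exists>a'. S = BApp a' b \<and> bwstep r a a') \<or> (\<exists>b'. S = BApp a b' \<and> bwstep r b b')"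
  unfolding bwstep_def
  apply (elim exE conjE)
  subgoal for C T' S' by (cases C) auto
  done
lemma bwstep_DerE: "bwstep r (Der a) S \<Longrightarrow> r (Der a) S \<or> (\<exists>a'. S = Der a' \<and> bwstep r a a')"
  unfolding bwstep_def
  apply (elim exE conjE)
  subgoal for C T' S' by (cases C) auto
  done
lemma bstep_BoxE: "bstep r (Box a) S \<Longrightarrow> r (Box a) S \<or> (\<exists>a'. S = Box a' \<and> bstep r a a')"
  unfolding bstep_def
  apply (elim exE conjE)
  subgoal for C T' S' by (cases C) auto
  done

definition lgstep :: "(lctx \<Rightarrow> bool) \<Rightarrow> (lterm \<Rightarrow> lterm \<Rightarrow> bool) \<Rightarrow> lterm \<Rightarrow> lterm \<Rightarrow> bool" where
  "lgstep g r M N \<longleftrightarrow> (\<exists>C M' N'. g C \<and> M = lfill C M' \<and> N = lfill C N' \<and> r M' N')"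

lemma beta_eq: "beta = lgstep (\<lambda>_. True) root_beta"
  unfolding beta_def lgstep_def by (intro ext) simp
lemma betav_eq: "betav = lgstep (\<lambda>_. True) root_betav"
  unfolding betav_def lgstep_def by (intro ext) simp
lemma wbeta_eq: "wbeta = lgstep cbn_ground root_beta"
  unfolding wbeta_def lgstep_def by (intro ext) simp
lemma wbetav_eq: "wbetav = lgstep cbv_ground root_betav"
  unfolding wbetav_def lgstep_def by (intro ext) simp

lemma lg_root: "g LHole \<Longrightarrow> r a b \<Longrightarrow> lgstep g r a b"
  unfolding lgstep_def by (metis lfill.simps(1))
lemma lg_Lam: "lgstep g r a b \<Longrightarrow> (\<And>C. g C \<Longrightarrow> g (LCLam C)) \<Longrightarrow> lgstep g r (Lam a) (Lam b)"
  unfolding lgstep_def by (metis lfill.simps(2))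
lemma lg_AppL: "lgstep g r a b \<Longrightarrow> (\<And>C. g C \<Longrightarrow> g (LCAppL C c)) \<Longrightarrow> lgstep g r (App a c) (App b c)"
  unfolding lgstep_def by (metis lfill.simps(3))
lemma lg_AppR: "lgstep g r a b \<Longrightarrow> (\<And>C. g C \<Longrightarrow> g (LCAppR c C)) \<Longrightarrow> lgstep g r (App c a) (App c b)"
  unfolding lgstep_def by (metis lfill.simps(4))

lemma cbn_lift: "cbn (llift t k) = blift (cbn t) k"
  by (induction t arbitrary: k) auto

lemma cbn_subst: "cbn (lsubst t s k) = bsubst (cbn t) (cbn s) k"
  by (induction t arbitrary: s k) (auto simp: cbn_lift)

lemma cbv_lift: "cbv (llift t k) = blift (cbv t) k"
  by (induction t arbitrary: k) auto

primrec vstrip :: "lterm \<Rightarrow> bterm" where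
  "vstrip (Var i) = BVar i"
| "vstrip (Lam t) = BLam (cbv t)"
| "vstrip (App t s) = BVar 0"

lemma cbv_val: "is_value V \<Longrightarrow> cbv V = Box (vstrip V)"
  by (cases V) auto

lemma vstrip_lift: "is_value V \<Longrightarrow> vstrip (llift V k) = blift (vstrip V) k \<and> is_value (llift V k)"
  by (cases V) (auto simp: cbv_lift)

lemma cbv_subst: "is_value V \<Longrightarrow> cbv (lsubst t V k) = bsubst (cbv t) (vstrip V) k"
  by (induction t arbitrary: V k) (auto simp: cbv_val vstrip_lift)

lemma cbv_Box: "cbv t = Box X \<Longrightarrow> is_value t \<and> X = vstrip t"
  by (cases t) auto

lemma cbn_BLam: "cbn t = BLam a \<Longrightarrow> \<exists>u. t = Lam u \<and> a = cbn u"
  by (cases t) auto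

lemma vstrip_BLam: "is_value t \<Longrightarrow> vstrip t = BLam a \<Longrightarrow> \<exists>u. t = Lam u \<and> a = cbv u"
  by (cases t) auto

lemma no_v_cbv: "\<not> bstep root_v (cbv M) S"
proof (induction M arbitrary: S)
  case (Var x)
  then show ?case by (auto dest!: bstep_BoxE bstep_BVar simp: root_v_def)
next
  case (Lam M)
  then show ?case by (auto dest!: bstep_BoxE bstep_LamE simp: root_v_def)
next
  case (App M1 M2)
  then show ?case
    by (auto dest!: bstep_AppE bstep_DerE simp: root_v_def)
qed


lemma bwstep_bstep: "bwstep r a b \<Longrightarrow> bstep r a b"
  unfolding bwstep_def bstep_def by blast

lemma no_v_vstrip: "is_value t \<Longrightarrow> \<not> bstep root_v (vstrip t) S"
  by (cases t) (auto dest!: bstep_BVar bstep_LamE simp: root_v_def no_v_cbv)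

lemma cbn_fwd: "root_beta a b \<Longrightarrow> bstep root_v (cbn (lfill C a)) (cbn (lfill C b))"
proof (induction C)
  case LHole
  then show ?case by (auto simp: root_beta_def root_v_def cbn_subst intro!: bstep_root)
qed (auto intro: bstep_Lam bstep_AppL bstep_AppR bstep_Box)

lemma cbn_wfwd: "cbn_ground C \<Longrightarrow> root_beta a b \<Longrightarrow> bwstep root_v (cbn (lfill C a)) (cbn (lfill C b))"
proof (induction C)
  case LHole
  then show ?case by (auto simp: root_beta_def root_v_def cbn_subst intro!: bwstep_root)
qed (auto intro: bwstep_Lam bwstep_AppL)

lemma cbv_fwd: "root_betav a b \<Longrightarrow> \<exists>S0. bstep root_d (cbv (lfill C a)) S0 \<and> bstep root_v S0 (cbv (lfill C b))"
proof (induction C)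
  case LHole
  then obtain t V where "is_value V" "a = App (Lam t) V" "b = lsubst t V 0"
    unfolding root_betav_def by blast
  then show ?case
    by (intro exI[of _ "BApp (BLam (cbv t)) (cbv V)"])
      (auto simp: root_d_def root_v_def cbv_subst cbv_val intro!: bstep_root bstep_AppL)
next
  case (LCLam C)
  then show ?case by (auto intro: bstep_Lam bstep_Box)
next
  case (LCAppL C x2)
  then show ?case by (auto intro: bstep_Der bstep_AppL)
next
  case (LCAppR x1 C)
  then show ?case by (auto intro: bstep_AppR)
qed

lemma cbv_wfwd: "cbv_ground C \<Longrightarrow> root_betav a b \<Longrightarrow> \<exists>S0. bwstep root_d (cbv (lfill C a)) S0 \<and> bwstep root_v S0 (cbv (lfill C b))"
proof (induction C)
  case LHole
  then obtain t V where "is_value V" "a = App (Lam t) V" "b = lsubst t V 0"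
    unfolding root_betav_def by blast
  then show ?case
    by (intro exI[of _ "BApp (BLam (cbv t)) (cbv V)"])
      (auto simp: root_d_def root_v_def cbv_subst cbv_val intro!: bwstep_root bwstep_AppL)
next
  case (LCLam C)
  then show ?case by auto
next
  case (LCAppL C x2)
  then show ?case by (auto intro: bwstep_Der bwstep_AppL)
next
  case (LCAppR x1 C)
  then show ?case by (auto intro: bwstep_AppR)
qed


lemma cbn_bwd: "bstep root_b (cbn M) S \<Longrightarrow> bstep root_v (cbn M) S \<and> (\<exists>M'. S = cbn M' \<and> lgstep (\<lambda>_. True) root_beta M M')"
proof (induction M arbitrary: S)
  case (Var x)
  then show ?case by (auto dest!: bstep_BVar simp: root_b_def root_v_def root_d_def)
next
  case (Lam M)
  have "\<not> root_b (BLam (cbn M)) S" by (simp add: root_b_def root_v_def root_d_def)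
  with bstep_LamE[OF Lam.prems[simplified]] obtain a' where "S = BLam a'" "bstep root_b (cbn M) a'"
    by blast
  moreover from Lam.IH[OF this(2)] obtain M' where "bstep root_v (cbn M) a'" "a' = cbn M'" "lgstep (\<lambda>_. True) root_beta M M'" by blast
  ultimately show ?case
    by (auto intro!: bstep_Lam lg_Lam exI[of _ "Lam M'"])
next
  case (App t s)
  from bstep_AppE[OF App.prems[simplified]] show ?case
  proof (elim disjE exE conjE)
    assume "root_b (BApp (cbn t) (Box (cbn s))) S"
    then obtain a where "cbn t = BLam a" "S = bsubst a (cbn s) 0"
      by (auto simp: root_b_def root_v_def root_d_def)
    moreover then obtain u where "t = Lam u" "a = cbn u" using cbn_BLam by blast
    ultimately have "S = cbn (lsubst u s 0)" "t = Lam u" "a = cbn u" by (auto simp: cbn_subst)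
    moreover have "root_beta (App (Lam u) s) (lsubst u s 0)" unfolding root_beta_def by blast
    moreover have "root_v (cbn (App (Lam u) s)) (cbn (lsubst u s 0))" by (simp add: root_v_def cbn_subst)
    ultimately show ?thesis
      by (auto intro!: bstep_root lg_root)
  next
    fix a' assume "S = BApp a' (Box (cbn s))" "bstep root_b (cbn t) a'"
    moreover from App.IH(1)[OF this(2)] obtain M' where "bstep root_v (cbn t) a'" "a' = cbn M'" "lgstep (\<lambda>_. True) root_beta t M'" by blast
    ultimately show ?thesis
      by (auto intro!: bstep_AppL lg_AppL exI[of _ "App M' s"])
  next
    fix b' assume S: "S = BApp (cbn t) b'" and b: "bstep root_b (Box (cbn s)) b'"
    from bstep_BoxE[OF b] obtain b'' where "b' = Box b''" "bstep root_b (cbn s) b''"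
      by (auto simp: root_b_def root_v_def root_d_def)
    moreover from App.IH(2)[OF this(2)] obtain M' where "bstep root_v (cbn s) b''" "b'' = cbn M'" "lgstep (\<lambda>_. True) root_beta s M'" by blast
    ultimately show ?thesis using S
      by (auto intro!: bstep_AppR bstep_Box lg_AppR exI[of _ "App t M'"])
  qed
qed

lemma cbn_wbwd: "bwstep root_b (cbn M) S \<Longrightarrow> bwstep root_v (cbn M) S \<and> (\<exists>M'. S = cbn M' \<and> lgstep cbn_ground root_beta M M')"
proof (induction M arbitrary: S)
  case (Var x)
  then show ?case by (auto dest!: bwstep_BVar simp: root_b_def root_v_def root_d_def)
next
  case (Lam M)
  have "\<not> root_b (BLam (cbn M)) S" by (simp add: root_b_def root_v_def root_d_def)
  with bwstep_LamE[OF Lam.prems[simplified]] obtain a' where "S = BLam a'" "bwstep root_b (cbn M) a'"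
    by blast
  moreover from Lam.IH[OF this(2)] obtain M' where "bwstep root_v (cbn M) a'" "a' = cbn M'" "lgstep cbn_ground root_beta M M'" by blast
  ultimately show ?case
    by (auto intro!: bwstep_Lam lg_Lam exI[of _ "Lam M'"])
next
  case (App t s)
  from bwstep_AppE[OF App.prems[simplified]] show ?case
  proof (elim disjE exE conjE)
    assume "root_b (BApp (cbn t) (Box (cbn s))) S"
    then obtain a where "cbn t = BLam a" "S = bsubst a (cbn s) 0"
      by (auto simp: root_b_def root_v_def root_d_def)
    moreover then obtain u where "t = Lam u" "a = cbn u" using cbn_BLam by blast
    ultimately have "S = cbn (lsubst u s 0)" "t = Lam u" "a = cbn u" by (auto simp: cbn_subst)
    moreover have "root_beta (App (Lam u) s) (lsubst u s 0)" unfolding root_beta_def by blast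
    moreover have "root_v (cbn (App (Lam u) s)) (cbn (lsubst u s 0))" by (simp add: root_v_def cbn_subst)
    ultimately show ?thesis
      by (auto intro!: bwstep_root lg_root)
  next
    fix a' assume "S = BApp a' (Box (cbn s))" "bwstep root_b (cbn t) a'"
    moreover from App.IH(1)[OF this(2)] obtain M' where "bwstep root_v (cbn t) a'" "a' = cbn M'" "lgstep cbn_ground root_beta t M'" by blast
    ultimately show ?thesis
      by (auto intro!: bwstep_AppL lg_AppL exI[of _ "App M' s"])
  next
    fix b' assume S: "S = BApp (cbn t) b'" and b: "bwstep root_b (Box (cbn s)) b'"
    from bwstep_Box[OF b] show ?thesis
      by (auto simp: root_b_def root_v_def root_d_def)
  qed
qed


lemma cbv_bwd: "bstep root_d (cbv M) S0 \<Longrightarrow> bstep root_v S0 S \<Longrightarrow> \<exists>M'. S = cbv M' \<and> lgstep (\<lambda>_. True) root_betav M M'"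
proof (induction M arbitrary: S0 S)
  case (Var x)
  then show ?case by (auto dest!: bstep_BVar bstep_BoxE simp: root_d_def)
next
  case (Lam M)
  have "\<not> root_d (Box (BLam (cbv M))) S0" by (simp add: root_d_def)
  with bstep_BoxE[OF Lam.prems(1)[simplified]] obtain a' where a': "S0 = Box a'" "bstep root_d (BLam (cbv M)) a'" by blast
  have "\<not> root_d (BLam (cbv M)) a'" by (simp add: root_d_def)
  with bstep_LamE[OF a'(2)] obtain a'' where a'': "a' = BLam a''" "bstep root_d (cbv M) a''" by blast
  have v: "bstep root_v (Box (BLam a'')) S" using Lam.prems(2) a' a'' by simp
  have "\<not> root_v (Box (BLam a'')) S" by (simp add: root_v_def)
  with bstep_BoxE[OF v] obtain c where c: "S = Box c" "bstep root_v (BLam a'') c" by blast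
  have "\<not> root_v (BLam a'') c" by (simp add: root_v_def)
  with bstep_LamE[OF c(2)] obtain c' where c': "c = BLam c'" "bstep root_v a'' c'" by blast
  from Lam.IH[OF a''(2) c'(2)] obtain M' where "c' = cbv M'" "lgstep (\<lambda>_. True) root_betav M M'" by blast
  then show ?case using c c' by (auto intro!: lg_Lam exI[of _ "Lam M'"])
next
  case (App t s)
  have nr: "\<not> root_d (BApp (Der (cbv t)) (cbv s)) S0" by (simp add: root_d_def)
  from bstep_AppE[OF App.prems(1)[simplified]] nr show ?case
  proof (elim disjE exE conjE)
    assume "root_d (BApp (Der (cbv t)) (cbv s)) S0"
    then show ?thesis using nr by blast
  next
    fix a' assume S0: "S0 = BApp a' (cbv s)" and d: "bstep root_d (Der (cbv t)) a'"
    from bstep_DerE[OF d] show ?thesis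
    proof (elim disjE exE conjE)
      assume "root_d (Der (cbv t)) a'"
      then have "cbv t = Box a'" by (simp add: root_d_def)
      then have vt: "is_value t" "a' = vstrip t" using cbv_Box by blast+
      have v: "bstep root_v (BApp (vstrip t) (cbv s)) S" using App.prems(2) S0 vt by simp
      from bstep_AppE[OF v] show ?thesis
      proof (elim disjE exE conjE)
        assume "root_v (BApp (vstrip t) (cbv s)) S"
        then obtain x y where xy: "vstrip t = BLam x" "cbv s = Box y" "S = bsubst x y 0"
          by (auto simp: root_v_def)
        from vstrip_BLam[OF vt(1) xy(1)] obtain u where u: "t = Lam u" "x = cbv u" by blast
        from cbv_Box[OF xy(2)] have vs: "is_value s" "y = vstrip s" by auto
        have "S = cbv (lsubst u s 0)" using xy u vs by (simp add: cbv_subst)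
        moreover have "root_betav t' t'' \<Longrightarrow> lgstep (\<lambda>_. True) root_betav t' t''" for t' t''
          by (rule lg_root) simp_all
        moreover have "root_betav (App (Lam u) s) (lsubst u s 0)" unfolding root_betav_def using vs by blast
        ultimately show ?thesis using u by blast
      next
        fix e assume "bstep root_v (vstrip t) e"
        then show ?thesis using no_v_vstrip[OF vt(1)] by blast
      next
        fix e assume "bstep root_v (cbv s) e"
        then show ?thesis using no_v_cbv by blast
      qed
    next
      fix a'' assume a': "a' = Der a''" and d2: "bstep root_d (cbv t) a''"
      have v: "bstep root_v (BApp (Der a'') (cbv s)) S" using App.prems(2) S0 a' by simp
      from bstep_AppE[OF v] show ?thesis
      proof (elim disjE exE conjE)
        assume "root_v (BApp (Der a'') (cbv s)) S"
        then show ?thesis by (simp add: root_v_def)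
      next
        fix e assume S: "S = BApp e (cbv s)" and e: "bstep root_v (Der a'') e"
        have "\<not> root_v (Der a'') e" by (simp add: root_v_def)
        with bstep_DerE[OF e] obtain e' where e': "e = Der e'" "bstep root_v a'' e'" by blast
        from App.IH(1)[OF d2 e'(2)] obtain M' where "e' = cbv M'" "lgstep (\<lambda>_. True) root_betav t M'" by blast
        then show ?thesis using S e' by (auto intro!: lg_AppL exI[of _ "App M' s"])
      next
        fix e assume "bstep root_v (cbv s) e"
        then show ?thesis using no_v_cbv by blast
      qed
    qed
  next
    fix b' assume S0: "S0 = BApp (Der (cbv t)) b'" and d: "bstep root_d (cbv s) b'"
    have v: "bstep root_v (BApp (Der (cbv t)) b') S" using App.prems(2) S0 by simp
    from bstep_AppE[OF v] show ?thesis
    proof (elim disjE exE conjE)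
      assume "root_v (BApp (Der (cbv t)) b') S"
      then show ?thesis by (simp add: root_v_def)
    next
      fix e assume e: "bstep root_v (Der (cbv t)) e"
      have "\<not> root_v (Der (cbv t)) e" by (simp add: root_v_def)
      with bstep_DerE[OF e] obtain e' where e': "bstep root_v (cbv t) e'" by blast
      then show ?thesis using no_v_cbv by blast
    next
      fix e assume S: "S = BApp (Der (cbv t)) e" and e: "bstep root_v b' e"
      from App.IH(2)[OF d e] obtain M' where "e = cbv M'" "lgstep (\<lambda>_. True) root_betav s M'" by blast
      then show ?thesis using S by (auto intro!: lg_AppR exI[of _ "App t M'"])
    qed
  qed
qed

lemma cbv_bwd_w: "bwstep root_d (cbv M) S0 \<Longrightarrow> bwstep root_v S0 S \<Longrightarrow> \<exists>M'. S = cbv M' \<and> lgstep cbv_ground root_betav M M'"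
proof (induction M arbitrary: S0 S)
  case (Var x)
  then show ?case by (auto dest!: bwstep_BVar bwstep_Box simp: root_d_def)
next
  case (Lam M)
  from bwstep_Box[OF Lam.prems(1)[simplified]] show ?case by (simp add: root_d_def)
next
  case (App t s)
  have nr: "\<not> root_d (BApp (Der (cbv t)) (cbv s)) S0" by (simp add: root_d_def)
  from bwstep_AppE[OF App.prems(1)[simplified]] nr show ?case
  proof (elim disjE exE conjE)
    assume "root_d (BApp (Der (cbv t)) (cbv s)) S0"
    then show ?thesis using nr by blast
  next
    fix a' assume S0: "S0 = BApp a' (cbv s)" and d: "bwstep root_d (Der (cbv t)) a'"
    from bwstep_DerE[OF d] show ?thesis
    proof (elim disjE exE conjE)
      assume "root_d (Der (cbv t)) a'"
      then have "cbv t = Box a'" by (simp add: root_d_def)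
      then have vt: "is_value t" "a' = vstrip t" using cbv_Box by blast+
      have v: "bwstep root_v (BApp (vstrip t) (cbv s)) S" using App.prems(2) S0 vt by simp
      from bwstep_AppE[OF v] show ?thesis
      proof (elim disjE exE conjE)
        assume "root_v (BApp (vstrip t) (cbv s)) S"
        then obtain x y where xy: "vstrip t = BLam x" "cbv s = Box y" "S = bsubst x y 0"
          by (auto simp: root_v_def)
        from vstrip_BLam[OF vt(1) xy(1)] obtain u where u: "t = Lam u" "x = cbv u" by blast
        from cbv_Box[OF xy(2)] have vs: "is_value s" "y = vstrip s" by auto
        have "S = cbv (lsubst u s 0)" using xy u vs by (simp add: cbv_subst)
        moreover have "root_betav t' t'' \<Longrightarrow> lgstep cbv_ground root_betav t' t''" for t' t''
          by (rule lg_root) simp_all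
        moreover have "root_betav (App (Lam u) s) (lsubst u s 0)" unfolding root_betav_def using vs by blast
        ultimately show ?thesis using u by blast
      next
        fix e assume "bwstep root_v (vstrip t) e"
        then show ?thesis using no_v_vstrip[OF vt(1)] bwstep_bstep by blast
      next
        fix e assume "bwstep root_v (cbv s) e"
        then show ?thesis using no_v_cbv bwstep_bstep by blast
      qed
    next
      fix a'' assume a': "a' = Der a''" and d2: "bwstep root_d (cbv t) a''"
      have v: "bwstep root_v (BApp (Der a'') (cbv s)) S" using App.prems(2) S0 a' by simp
      from bwstep_AppE[OF v] show ?thesis
      proof (elim disjE exE conjE)
        assume "root_v (BApp (Der a'') (cbv s)) S"
        then show ?thesis by (simp add: root_v_def)
      next
        fix e assume S: "S = BApp e (cbv s)" and e: "bwstep root_v (Der a'') e"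
        have "\<not> root_v (Der a'') e" by (simp add: root_v_def)
        with bwstep_DerE[OF e] obtain e' where e': "e = Der e'" "bwstep root_v a'' e'" by blast
        from App.IH(1)[OF d2 e'(2)] obtain M' where "e' = cbv M'" "lgstep cbv_ground root_betav t M'" by blast
        then show ?thesis using S e' by (auto intro!: lg_AppL exI[of _ "App M' s"])
      next
        fix e assume "bwstep root_v (cbv s) e"
        then show ?thesis using no_v_cbv bwstep_bstep by blast
      qed
    qed
  next
    fix b' assume S0: "S0 = BApp (Der (cbv t)) b'" and d: "bwstep root_d (cbv s) b'"
    have v: "bwstep root_v (BApp (Der (cbv t)) b') S" using App.prems(2) S0 by simp
    from bwstep_AppE[OF v] show ?thesis
    proof (elim disjE exE conjE)
      assume "root_v (BApp (Der (cbv t)) b') S"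
      then show ?thesis by (simp add: root_v_def)
    next
      fix e assume e: "bwstep root_v (Der (cbv t)) e"
      have "\<not> root_v (Der (cbv t)) e" by (simp add: root_v_def)
      with bwstep_DerE[OF e] obtain e' where e': "bwstep root_v (cbv t) e'" by blast
      then show ?thesis using no_v_cbv bwstep_bstep by blast
    next
      fix e assume S: "S = BApp (Der (cbv t)) e" and e: "bwstep root_v b' e"
      from App.IH(2)[OF d e] obtain M' where "e = cbv M'" "lgstep cbv_ground root_betav s M'" by blast
      then show ?thesis using S by (auto intro!: lg_AppR exI[of _ "App t M'"])
    qed
  qed
qed


lemma vb: "bstep root_v a b \<Longrightarrow> bstep root_b a b" "bstep root_d a b \<Longrightarrow> bstep root_b a b"
  "bwstep root_v a b \<Longrightarrow> bwstep root_b a b" "bwstep root_d a b \<Longrightarrow> bwstep root_b a b"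
  by (auto elim: bstep_mono bwstep_mono simp: root_b_def)

theorem mainTheorem1:
  fixes M :: lterm
  shows
   "((\<forall>M'. beta M M' \<longrightarrow> step_v (cbn M) (cbn M') \<and> step_b (cbn M) (cbn M')) \<and>
     (\<forall>S. step_b (cbn M) S \<longrightarrow> step_v (cbn M) S \<and> (\<exists>M'. S = cbn M' \<and> beta M M')))
  \<and> ((\<forall>M'. wbeta M M' \<longrightarrow> wstep_v (cbn M) (cbn M') \<and> wstep_b (cbn M) (cbn M')) \<and>
     (\<forall>S. wstep_b (cbn M) S \<longrightarrow> wstep_v (cbn M) S \<and> (\<exists>M'. S = cbn M' \<and> wbeta M M')))
  \<and> ((\<forall>M'. betav M M' \<longrightarrow> (\<exists>S0. step_d (cbv M) S0 \<and> step_v S0 (cbv M'))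
                          \<and> (\<exists>S0. step_b (cbv M) S0 \<and> step_b S0 (cbv M'))) \<and>
     (\<forall>S0 S. step_d (cbv M) S0 \<and> step_v S0 S \<longrightarrow> (\<exists>M'. S = cbv M' \<and> betav M M')))
  \<and> ((\<forall>M'. wbetav M M' \<longrightarrow> (\<exists>S0. wstep_d (cbv M) S0 \<and> wstep_v S0 (cbv M'))
                          \<and> (\<exists>S0. wstep_b (cbv M) S0 \<and> wstep_b S0 (cbv M'))) \<and>
     (\<forall>S0 S. wstep_d (cbv M) S0 \<and> wstep_v S0 S \<longrightarrow> (\<exists>M'. S = cbv M' \<and> wbetav M M')))"
proof (intro conjI allI impI)
  fix M' assume "beta M M'"
  then show "step_v (cbn M) (cbn M')" unfolding beta_def using cbn_fwd by blast
  then show "step_b (cbn M) (cbn M')" by (rule vb)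
next
  fix S assume "step_b (cbn M) S"
  from cbn_bwd[OF this] show "step_v (cbn M) S" "\<exists>M'. S = cbn M' \<and> beta M M'"
    by (auto simp: beta_eq)
next
  fix M' assume "wbeta M M'"
  then show "wstep_v (cbn M) (cbn M')" unfolding wbeta_def using cbn_wfwd by blast
  then show "wstep_b (cbn M) (cbn M')" by (rule vb)
next
  fix S assume "wstep_b (cbn M) S"
  from cbn_wbwd[OF this] show "wstep_v (cbn M) S" "\<exists>M'. S = cbn M' \<and> wbeta M M'"
    by (auto simp: wbeta_eq)
next
  fix M' assume "betav M M'"
  then show "\<exists>S0. step_d (cbv M) S0 \<and> step_v S0 (cbv M')" unfolding betav_def using cbv_fwd by blast
  then show "\<exists>S0. step_b (cbv M) S0 \<and> step_b S0 (cbv M')" using vb by blast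
next
  fix S0 S assume "step_d (cbv M) S0 \<and> step_v S0 S"
  then show "\<exists>M'. S = cbv M' \<and> betav M M'" using cbv_bwd by (auto simp: betav_eq)
next
  fix M' assume "wbetav M M'"
  then show "\<exists>S0. wstep_d (cbv M) S0 \<and> wstep_v S0 (cbv M')" unfolding wbetav_def using cbv_wfwd by blast
  then show "\<exists>S0. wstep_b (cbv M) S0 \<and> wstep_b S0 (cbv M')" using vb by blast
next
  fix S0 S assume "wstep_d (cbv M) S0 \<and> wstep_v S0 S"
  then show "\<exists>M'. S = cbv M' \<and> wbetav M M'" using cbv_bwd_w by (auto simp: wbetav_eq)
qed

end
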